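(* For every integer $m\ge0$ and every integer $l\ge 2m+3$, \[ \mu_l^{(m+1,m+2)}=2P_{l-2m-3}^{\{-2,m-1,m\}} . \]
   Context: An $n$-board is the strip $[0,n]\times[0,1]$ divided into unit cells, each split into a left and a right half (slot). A $(w,g;t)$-comb is a tile consisting of a row of $t$ rectangles (teeth) of size $w\times1$, consecutive teeth separated by a gap of width $g$; gaps are not part of the tile and may be occupied by other tiles. A tiling is a placement of translated (unrotated) combs whose teeth cover the board exactly without overlap. Given a tiling of an $n$-board, an integer $x$ with $0<x<n$ is a cut point if every comb has all of its teeth in $[0,x]$ or all in $[x,n]$. A metatile of length $l$ is a tiling of an $l$-board with no cut point. A metatile is mixed if it contains combs of more than one type. For integers $1\le m_1<m_2$, $\mu_l^{(m_1,m_2)}$ is the number of mixed metatiles of length $l$ when tiling with $(\frac12,\frac12;m_1)$- and $(\frac12,\frac12;m_2)$-combs. For a finite set $W$ of integers, $P_n^W$ is the number of permutations $\pi$ of $\{1,\dots,n\}$ with $\pi(i)-i\in W$ for all $i$ (equivalently, the permanent of the $n\times n$ $(0,1)$ matrix whose $(i,j)$ entry is $1$ iff $j-i\in W$), with $P_0^W=1$. *)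

theory Defs
  imports "HOL-Combinatorics.Permutations"
begin

text \<open>Discretisation: the n-board [0,n] x [0,1] has 2n half-cell slots, slot k
  being [k/2,(k+1)/2]. A placed (1/2,1/2;t)-comb is a pair (s,t): its teeth occupy
  the slots s, s+2, ..., s+2(t-1). (Since teeth have width 1/2 and must tile [0,n]
  exactly, every translation in a tiling is a multiple of 1/2.)\<close>

definition comb_slots :: "nat \<times> nat \<Rightarrow> nat set" where
  "comb_slots c = {fst c + 2 * i | i. i < snd c}"

definition is_tiling :: "nat \<Rightarrow> nat \<Rightarrow> nat \<Rightarrow> (nat \<times> nat) set \<Rightarrow> bool" where
  "is_tiling m1 m2 n T \<longleftrightarrow>
     finite T \<and> (\<forall>c\<in>T. snd c \<in> {m1, m2}) \<and>
     (\<Union>c\<in>T. comb_slots c) = {..<2 * n} \<and>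
     (\<forall>c\<in>T. \<forall>d\<in>T. c \<noteq> d \<longrightarrow> comb_slots c \<inter> comb_slots d = {})"

definition is_cut_point :: "nat \<Rightarrow> (nat \<times> nat) set \<Rightarrow> nat \<Rightarrow> bool" where
  "is_cut_point n T x \<longleftrightarrow> 0 < x \<and> x < n \<and>
     (\<forall>c\<in>T. comb_slots c \<subseteq> {..<2 * x} \<or> comb_slots c \<subseteq> {2 * x..})"

definition is_metatile :: "nat \<Rightarrow> nat \<Rightarrow> nat \<Rightarrow> (nat \<times> nat) set \<Rightarrow> bool" where
  "is_metatile m1 m2 l T \<longleftrightarrow> is_tiling m1 m2 l T \<and> (\<forall>x. \<not> is_cut_point l T x)"

definition is_mixed :: "(nat \<times> nat) set \<Rightarrow> bool" where
  "is_mixed T \<longleftrightarrow> (\<exists>c\<in>T. \<exists>d\<in>T. snd c \<noteq> snd d)"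

definition mu :: "nat \<Rightarrow> nat \<Rightarrow> nat \<Rightarrow> nat" where
  "mu m1 m2 l = card {T. is_metatile m1 m2 l T \<and> is_mixed T}"

definition P :: "nat \<Rightarrow> int set \<Rightarrow> nat" where
  "P n W = card {p. p permutes {1..n} \<and> (\<forall>i\<in>{1..n}. int (p i) - int i \<in> W)}"

end

theory Submission
  imports Defs
begin


definition good :: "nat \<Rightarrow> nat \<Rightarrow> nat \<Rightarrow> nat set \<Rightarrow> bool" where
  "good a lo hi Z \<longleftrightarrow> Z \<subseteq> {lo..hi} \<and> lo \<in> Z \<and> Suc lo \<in> Z \<and> hi - 1 \<in> Z \<and> hi \<in> Z \<and>
     (\<forall>x\<in>Z. x < hi - 1 \<longrightarrow> (\<exists>y\<in>Z. (y = x + a \<or> y = x + a + 1) \<and> card {w\<in>Z. x < w \<and> w < y} = 1))"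

definition s2 :: "nat set \<Rightarrow> nat \<Rightarrow> nat" where
  "s2 X i = (THE y. y \<in> X \<and> card {w\<in>X. i < w \<and> w < y} = 1)"

definition permX :: "nat \<Rightarrow> nat set \<Rightarrow> nat \<Rightarrow> nat" where
  "permX n X i = (if i \<in> {1..n} then (if i \<in> X then s2 X i - 2 else i - 2) else i)"

definition Fset :: "(nat \<Rightarrow> nat) \<Rightarrow> nat \<Rightarrow> nat set" where
  "Fset p n = {i\<in>{1..n}. int (p i) \<noteq> int i - 2} \<union> {n+1, n+2}"

lemma card1_less:
  fixes X :: "nat set"
  assumes "finite X" "card {w\<in>X. i < w \<and> w < y} = 1"
  shows "i < y"
proof -
  from assms(2) have "{w\<in>X. i < w \<and> w < y} \<noteq> {}" by (metis card.empty zero_neq_one)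
  then show ?thesis by auto
qed

lemma card1_unique:
  fixes X :: "nat set"
  assumes fin: "finite X" and y: "y \<in> X" "card {w\<in>X. i < w \<and> w < y} = 1"
    and y': "y' \<in> X" "card {w\<in>X. i < w \<and> w < y'} = 1"
  shows "y = y'"
proof (rule ccontr)
  assume ne: "y \<noteq> y'"
  have gen: "False" if a: "u \<in> X" "card {w\<in>X. i < w \<and> w < u} = 1" "v \<in> X"
     "card {w\<in>X. i < w \<and> w < v} = 1" "u < v" for u v
  proof -
    have iu: "i < u" using card1_less[OF fin a(2)] .
    have sub: "insert u {w\<in>X. i < w \<and> w < u} \<subseteq> {w\<in>X. i < w \<and> w < v}"
      using a iu by auto
    have "card (insert u {w\<in>X. i < w \<and> w < u}) = 2"
      using a(2) fin by (subst card_insert_disjoint) auto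
    moreover have "card (insert u {w\<in>X. i < w \<and> w < u}) \<le> card {w\<in>X. i < w \<and> w < v}"
      by (rule card_mono) (use fin sub in auto)
    ultimately show False using a(4) by simp
  qed
  show False
  proof (cases "y < y'")
    case True then show ?thesis using gen[OF y y'] by simp
  next
    case False then have "y' < y" using ne by simp
    then show ?thesis using gen[OF y' y] by simp
  qed
qed

lemma s2_eq:
  fixes X :: "nat set"
  assumes "finite X" "y \<in> X" "card {w\<in>X. i < w \<and> w < y} = 1"
  shows "s2 X i = y"
  unfolding s2_def
  by (rule the_equality) (use assms card1_unique[OF assms(1)] in blast)+

lemma card_split_le:
  fixes X :: "nat set"
  assumes "finite X" "x \<le> y"
  shows "card {u\<in>X. u \<le> y} = card {u\<in>X. u \<le> x} + card {u\<in>X. x < u \<and> u \<le> y}"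
proof -
  have "{u\<in>X. u \<le> y} = {u\<in>X. u \<le> x} \<union> {u\<in>X. x < u \<and> u \<le> y}" using assms by auto
  moreover have "{u\<in>X. u \<le> x} \<inter> {u\<in>X. x < u \<and> u \<le> y} = {}" by auto
  ultimately show ?thesis using assms(1) by (simp add: card_Un_disjoint)
qed

lemma card_split_lt:
  fixes X :: "nat set"
  assumes "finite X" "y \<in> X" "x < y"
  shows "card {u\<in>X. x < u \<and> u \<le> y} = card {u\<in>X. x < u \<and> u < y} + 1"
proof -
  have "{u\<in>X. x < u \<and> u \<le> y} = insert y {u\<in>X. x < u \<and> u < y}" using assms by auto
  then show ?thesis using assms(1) by simp
qed

lemma card1_two_contra:
  fixes X :: "nat set"
  assumes fin: "finite X" and "card {w\<in>X. i < w \<and> w < y} = 1" "card {w\<in>X. j < w \<and> w < y} = 1"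
    "i < j" "j \<in> X" "j < y"
  shows False
proof -
  have "insert j {w\<in>X. j < w \<and> w < y} \<subseteq> {w\<in>X. i < w \<and> w < y}" using assms by auto
  then have "card (insert j {w\<in>X. j < w \<and> w < y}) \<le> card {w\<in>X. i < w \<and> w < y}"
    by (intro card_mono) (use fin in auto)
  moreover have "card (insert j {w\<in>X. j < w \<and> w < y}) = 2"
    using assms(3) fin by (subst card_insert_disjoint) auto
  ultimately show False using assms(2) by simp
qed

lemma good_finite: "good a lo hi X \<Longrightarrow> finite X"
  unfolding good_def by (meson finite_atLeastAtMost finite_subset)

lemma good_s2:
  assumes g: "good a 1 (n+2) X" and i: "i \<in> X" "i \<le> n"
  shows "s2 X i \<in> X \<and> (s2 X i = i + a \<or> s2 X i = i + a + 1) \<and> card {w\<in>X. i < w \<and> w < s2 X i} = 1"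
proof -
  have fin: "finite X" using good_finite[OF g] .
  from g i obtain y where y: "y \<in> X" "y = i + a \<or> y = i + a + 1" "card {w\<in>X. i < w \<and> w < y} = 1"
    unfolding good_def by auto
  have "s2 X i = y" by (rule s2_eq[OF fin y(1) y(3)])
  then show ?thesis using y by simp
qed

lemma good_12:
  assumes g: "good a 1 (n+2) X"
  shows "1 \<in> X" "2 \<in> X" "n+1 \<in> X" "n+2 \<in> X" "X \<subseteq> {1..n+2}"
  using g unfolding good_def by (auto simp: numeral_2_eq_2)

lemma permX_valid:
  assumes g: "good (m+1) 1 (n+2) X"
  shows "permX n X permutes {1..n} \<and> (\<forall>i\<in>{1..n}. int (permX n X i) - int i \<in> {-2, int m - 1, int m})"
proof -
  have fin: "finite X" using good_finite[OF g] .
  note g12 = good_12[OF g]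
  have s2ge: "s2 X i \<ge> 3 \<and> s2 X i \<le> n + 2" if "i \<in> X" "i \<in> {1..n}" for i
  proof -
    have h: "s2 X i \<in> X" "card {w\<in>X. i < w \<and> w < s2 X i} = 1" using good_s2[OF g that(1)] that(2) by auto
    then have "{w\<in>X. i < w \<and> w < s2 X i} \<noteq> {}" by (metis card.empty zero_neq_one)
    then show ?thesis using that h g12(5) by auto
  qed
  have notX3: "i \<ge> 3" if "i \<notin> X" "i \<in> {1..n}" for i
    using that g12(1,2) by (cases "i = 1 \<or> i = 2") auto
  have range: "permX n X i \<in> {1..n}" if "i \<in> {1..n}" for i
  proof (cases "i \<in> X")
    case True then show ?thesis using s2ge[OF True that] that by (auto simp: permX_def)
  next
    case False then show ?thesis using notX3[OF False that] that by (auto simp: permX_def)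
  qed
  have inj: "inj_on (permX n X) {1..n}"
  proof (rule inj_onI)
    fix i j assume ij: "i \<in> {1..n}" "j \<in> {1..n}" "permX n X i = permX n X j"
    show "i = j"
    proof (cases "i \<in> X"; cases "j \<in> X")
      assume iX: "i \<in> X" and jX: "j \<in> X"
      have e: "s2 X i = s2 X j" using ij iX jX s2ge[OF iX ij(1)] s2ge[OF jX ij(2)] by (simp add: permX_def) linarith
      have ci: "card {w\<in>X. i < w \<and> w < s2 X i} = 1" "card {w\<in>X. j < w \<and> w < s2 X j} = 1"
        using good_s2[OF g iX] good_s2[OF g jX] ij by auto
      have li: "i < s2 X i" "j < s2 X j" using card1_less[OF fin ci(1)] card1_less[OF fin ci(2)] .
      show "i = j"
      proof (rule ccontr)
        assume "i \<noteq> j"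
        then consider "i < j" | "j < i" by linarith
        then show False
        proof cases
          case 1 then show False using card1_two_contra[OF fin ci(1) ci(2)[folded e] 1 jX] li e by simp
        next
          case 2 then show False using card1_two_contra[OF fin ci(2) ci(1)[unfolded e] 2 iX] li e by simp
        qed
      qed
    next
      assume iX: "i \<in> X" and jX: "j \<notin> X"
      have "s2 X i = j" using ij iX jX s2ge[OF iX ij(1)] notX3[OF jX ij(2)] by (simp add: permX_def)
      then have False using good_s2[OF g iX] ij jX by auto
      then show "i = j" ..
    next
      assume iX: "i \<notin> X" and jX: "j \<in> X"
      have "s2 X j = i" using ij iX jX s2ge[OF jX ij(2)] notX3[OF iX ij(1)] by (simp add: permX_def)
      then have False using good_s2[OF g jX] ij iX by auto
      then show "i = j" ..
    next
      assume iX: "i \<notin> X" and jX: "j \<notin> X"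
      then show "i = j" using ij notX3[OF iX ij(1)] notX3[OF jX ij(2)] by (simp add: permX_def)
    qed
  qed
  have perm: "permX n X permutes {1..n}"
    by (rule inj_imp_permutes[OF inj]) (use range in \<open>auto simp: permX_def\<close>)
  have disp: "int (permX n X i) - int i \<in> {-2, int m - 1, int m}" if i: "i \<in> {1..n}" for i
  proof (cases "i \<in> X")
    case True
    have "s2 X i = i + (m+1) \<or> s2 X i = i + (m+1) + 1" using good_s2[OF g True] i by auto
    then show ?thesis using True i by (auto simp: permX_def)
  next
    case False then show ?thesis using notX3[OF False i] i by (auto simp: permX_def)
  qed
  show ?thesis using perm disp by blast
qed

lemma Fset_permX:
  assumes g: "good (m+1) 1 (n+2) X"
  shows "Fset (permX n X) n = X"
proof -
  note g12 = good_12[OF g]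
  have "i \<in> X \<longleftrightarrow> int (permX n X i) \<noteq> int i - 2" if i: "i \<in> {1..n}" for i
  proof (cases "i \<in> X")
    case True
    have h: "s2 X i \<in> X" "card {w\<in>X. i < w \<and> w < s2 X i} = 1" using good_s2[OF g True] i by auto
    have "i < s2 X i" using card1_less[OF good_finite[OF g] h(2)] .
    moreover have "s2 X i \<ge> 1" using h g12(5) by auto
    ultimately show ?thesis using True i by (auto simp: permX_def)
  next
    case False
    have "i \<ge> 3" using False i g12(1,2) by (cases "i = 1 \<or> i = 2") auto
    then show ?thesis using False i by (auto simp: permX_def)
  qed
  then show ?thesis using g12 unfolding Fset_def by auto
qed

lemma Fset_good:
  assumes p: "p permutes {1..n}" and d: "\<forall>i\<in>{1..n}. int (p i) - int i \<in> {-2, int m - 1, int m}"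
  shows "good (m+1) 1 (n+2) (Fset p n) \<and> permX n (Fset p n) = p"
proof -
  define F where "F = {i\<in>{1..n}. int (p i) \<noteq> int i - 2}"
  define X where "X = F \<union> {n+1, n+2}"
  have XF: "Fset p n = X" unfolding X_def F_def Fset_def by simp
  have inj: "inj p" using permutes_inj[OF p] .
  have pr: "p i \<in> {1..n}" if "i \<in> {1..n}" for i using permutes_image[OF p] that by blast
  have surj: "\<exists>j\<in>{1..n}. p j = v" if "v \<in> {1..n}" for v
    using permutes_image[OF p] that by (metis imageE)
  have finX: "finite X" unfolding X_def F_def by auto
  have Xsub: "X \<subseteq> {1..n+2}" unfolding X_def F_def by auto
  have X12: "1 \<in> X" "2 \<in> X"
  proof -
    have "i \<in> X" if "i = 1 \<or> i = 2" for i :: nat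
    proof (cases "i \<le> n")
      case True
      then have "p i \<ge> 1" using pr[of i] that by auto
      then have "i \<in> F" unfolding F_def using True that by auto
      then show ?thesis unfolding X_def by auto
    next
      case False then show ?thesis unfolding X_def using that by auto
    qed
    then show "1 \<in> X" "2 \<in> X" by auto
  qed
  have f2: "p i + 2 = i + m + 1 \<or> p i + 2 = i + m + 2" if "i \<in> F" for i
  proof -
    have i1: "i \<in> {1..n}" and ne: "int (p i) \<noteq> int i - 2" using that unfolding F_def by auto
    have "int (p i) - int i \<in> {-2, int m - 1, int m}" using d i1 by blast
    then have "int (p i) - int i \<in> {int m - 1, int m}" using ne by auto
    then show ?thesis by auto
  qed
  have f2b: "p i + 2 \<in> X" if iF: "i \<in> F" for i
  proof (cases "p i + 2 \<le> n")
    case True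
    have i1: "i \<in> {1..n}" using iF unfolding F_def by auto
    have ne: "p i + 2 \<noteq> i" using f2[OF iF] by auto
    have "p (p i + 2) \<noteq> p i" using inj ne by (metis injD)
    then have "int (p (p i + 2)) \<noteq> int (p i + 2) - 2" by simp
    then have "p i + 2 \<in> F" unfolding F_def using True by auto
    then show ?thesis unfolding X_def by auto
  next
    case False
    have "p i \<le> n" using pr iF unfolding F_def by auto
    then show ?thesis using False unfolding X_def by auto
  qed
  have f3: "p i < p j" if "i \<in> F" "j \<in> F" "i < j" for i j
  proof -
    have "p i \<le> p j" using f2[OF that(1)] f2[OF that(2)] that(3) by auto
    moreover have "p i \<noteq> p j" using inj that(3) by (metis injD less_irrefl)
    ultimately show ?thesis by simp
  qed
  have key: "card {w\<in>X. x < w \<and> w < p x + 2} = 1" if xF: "x \<in> F" for x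
  proof -
    define y where "y = p x + 2"
    have xn: "x \<in> {1..n}" using xF unfolding F_def by auto
    have c1: "p ` {w\<in>F. w \<le> x} = {v\<in>{1..n}. v + 2 \<in> X \<and> v \<le> p x}"
    proof
      show "p ` {w\<in>F. w \<le> x} \<subseteq> {v\<in>{1..n}. v + 2 \<in> X \<and> v \<le> p x}"
      proof
        fix v assume "v \<in> p ` {w\<in>F. w \<le> x}"
        then obtain w where w: "w \<in> F" "w \<le> x" "v = p w" by auto
        have "p w \<le> p x" using f3[OF w(1) xF] w(2) by (cases "w = x") auto
        then show "v \<in> {v\<in>{1..n}. v + 2 \<in> X \<and> v \<le> p x}"
          using w pr f2b[OF w(1)] unfolding F_def by auto
      qed
    next
      show "{v\<in>{1..n}. v + 2 \<in> X \<and> v \<le> p x} \<subseteq> p ` {w\<in>F. w \<le> x}"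
      proof
        fix v assume v: "v \<in> {v\<in>{1..n}. v + 2 \<in> X \<and> v \<le> p x}"
        then obtain j where j: "j \<in> {1..n}" "p j = v" using surj by blast
        have jF: "j \<in> F"
        proof (rule ccontr)
          assume "j \<notin> F"
          then have "int (p j) = int j - 2" using j unfolding F_def by auto
          then have "v + 2 = j" using j by auto
          then show False using v j \<open>j \<notin> F\<close> unfolding X_def by auto
        qed
        have "j \<le> x"
        proof (rule ccontr)
          assume "\<not> j \<le> x"
          then have "p x < p j" using f3[OF xF jF] by simp
          then show False using v j by simp
        qed
        then show "v \<in> p ` {w\<in>F. w \<le> x}" using jF j by auto
      qed
    qed
    have c2: "card {w\<in>F. w \<le> x} = card {v\<in>{1..n}. v + 2 \<in> X \<and> v \<le> p x}"
      unfolding c1[symmetric] by (rule card_image[symmetric]) (use inj in \<open>auto intro: inj_on_subset\<close>)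
    have pxn: "p x \<le> n" using pr xn by auto
    have c3: "(\<lambda>v. v + 2) ` {v\<in>{1..n}. v + 2 \<in> X \<and> v \<le> p x} = {u\<in>X. 3 \<le> u \<and> u \<le> y}"
    proof
      show "(\<lambda>v. v + 2) ` {v\<in>{1..n}. v + 2 \<in> X \<and> v \<le> p x} \<subseteq> {u\<in>X. 3 \<le> u \<and> u \<le> y}"
        unfolding y_def by auto
    next
      show "{u\<in>X. 3 \<le> u \<and> u \<le> y} \<subseteq> (\<lambda>v. v + 2) ` {v\<in>{1..n}. v + 2 \<in> X \<and> v \<le> p x}"
      proof
        fix u assume u: "u \<in> {u\<in>X. 3 \<le> u \<and> u \<le> y}"
        moreover have "u - 2 + 2 = u" using u by auto
        ultimately have "u - 2 \<in> {v\<in>{1..n}. v + 2 \<in> X \<and> v \<le> p x}" using pxn unfolding y_def by auto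
        moreover have "u = (u - 2) + 2" using u by auto
        ultimately show "u \<in> (\<lambda>v. v + 2) ` {v\<in>{1..n}. v + 2 \<in> X \<and> v \<le> p x}" by blast
      qed
    qed
    have c3': "card {v\<in>{1..n}. v + 2 \<in> X \<and> v \<le> p x} = card {u\<in>X. 3 \<le> u \<and> u \<le> y}"
      unfolding c3[symmetric] by (rule card_image[symmetric]) (auto simp: inj_on_def)
    have c4: "card {u\<in>X. u \<le> y} = 2 + card {u\<in>X. 3 \<le> u \<and> u \<le> y}"
    proof -
      have "{u\<in>X. u \<le> y} = insert 1 (insert 2 {u\<in>X. 3 \<le> u \<and> u \<le> y})"
        using X12 Xsub unfolding y_def by auto
      then show ?thesis using finX by simp
    qed
    have c5: "{w\<in>F. w \<le> x} = {u\<in>X. u \<le> x}" using xn unfolding X_def by auto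
    have xy: "x < y" using f2[OF xF] unfolding y_def by auto
    have yX: "y \<in> X" using f2b[OF xF] unfolding y_def .
    have c6: "card {u\<in>X. u \<le> y} = card {u\<in>X. u \<le> x} + (card {u\<in>X. x < u \<and> u < y} + 1)"
      using card_split_le[OF finX, of x y] card_split_lt[OF finX yX xy] xy by simp
    show ?thesis using c2 c3' c4 c5 c6 unfolding y_def by simp
  qed
  have good: "good (m+1) 1 (n+2) X"
    unfolding good_def
  proof (intro conjI ballI impI)
    show "X \<subseteq> {1..n+2}" using Xsub .
    show "1 \<in> X" "Suc 1 \<in> X" using X12 by (auto simp: numeral_2_eq_2)
    show "n + 2 - 1 \<in> X" "n+2 \<in> X" unfolding X_def by auto
    fix x assume x: "x \<in> X" "x < n + 2 - 1"
    then have xF: "x \<in> F" unfolding X_def by auto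
    show "\<exists>y\<in>X. (y = x + (m + 1) \<or> y = x + (m + 1) + 1) \<and> card {w \<in> X. x < w \<and> w < y} = 1"
      using f2b[OF xF] f2[OF xF] key[OF xF] by (intro bexI[of _ "p x + 2"]) auto
  qed
  have eq: "permX n X = p"
  proof
    fix i show "permX n X i = p i"
    proof (cases "i \<in> {1..n}")
      case False then show ?thesis using permutes_not_in[OF p False] unfolding permX_def by auto
    next
      case True
      show ?thesis
      proof (cases "i \<in> F")
        case iF: True
        then have iX: "i \<in> X" unfolding X_def by auto
        have "s2 X i = p i + 2" by (rule s2_eq[OF finX f2b[OF iF] key[OF iF]])
        then show ?thesis using True iX by (simp add: permX_def)
      next
        case iF: False
        then have iX: "i \<notin> X" using True unfolding X_def by auto
        have "int (p i) = int i - 2" using iF True unfolding F_def by auto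
        then show ?thesis using True iX by (simp add: permX_def)
      qed
    qed
  qed
  show ?thesis using good eq XF by simp
qed

lemma P_eq_good:
  "P n {-2, int m - 1, int m} = card {X. good (m+1) 1 (n+2) X}"
proof -
  let ?A = "{p. p permutes {1..n} \<and> (\<forall>i\<in>{1..n}. int (p i) - int i \<in> {-2, int m - 1, int m})}"
  have "bij_betw (\<lambda>p. Fset p n) ?A {X. good (m+1) 1 (n+2) X}"
  proof (rule bij_betw_byWitness[where f' = "permX n"])
    show "\<forall>p\<in>?A. permX n (Fset p n) = p" using Fset_good by blast
    show "\<forall>X\<in>{X. good (m+1) 1 (n+2) X}. Fset (permX n X) n = X" using Fset_permX by blast
    show "(\<lambda>p. Fset p n) ` ?A \<subseteq> {X. good (m+1) 1 (n+2) X}" using Fset_good by blast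
    show "permX n ` {X. good (m+1) 1 (n+2) X} \<subseteq> ?A" using permX_valid by blast
  qed
  then show ?thesis unfolding P_def by (rule bij_betw_same_card)
qed



lemma card_shift_set:
  fixes Z :: "nat set"
  shows "card {w\<in>(\<lambda>z. z + k) ` Z. x + k < w \<and> w < y + k} = card {w\<in>Z. x < w \<and> w < y}"
proof -
  have "{w\<in>(\<lambda>z. z + k) ` Z. x + k < w \<and> w < y + k} = (\<lambda>z. z + k) ` {w\<in>Z. x < w \<and> w < y}" by auto
  then show ?thesis by (simp add: card_image inj_on_def)
qed

lemma good_shift_iff:
  assumes "hi \<ge> 1"
  shows "good a (lo+k) (hi+k) ((\<lambda>z. z + k) ` Z) \<longleftrightarrow> good a lo hi Z"
proof -
  have e1: "hi + k - 1 = (hi - 1) + k" using assms by simp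
  have e2: "((\<lambda>z. z + k) ` Z \<subseteq> {lo+k..hi+k}) \<longleftrightarrow> Z \<subseteq> {lo..hi}" by auto
  have e3: "(\<forall>x\<in>(\<lambda>z. z + k) ` Z. x < hi + k - 1 \<longrightarrow> (\<exists>y\<in>(\<lambda>z. z + k) ` Z. (y = x + a \<or> y = x + a + 1) \<and>
              card {w\<in>(\<lambda>z. z + k) ` Z. x < w \<and> w < y} = 1))
         \<longleftrightarrow> (\<forall>x\<in>Z. x < hi - 1 \<longrightarrow> (\<exists>y\<in>Z. (y = x + a \<or> y = x + a + 1) \<and> card {w\<in>Z. x < w \<and> w < y} = 1))"
  proof -
    have "(\<forall>x\<in>(\<lambda>z. z + k) ` Z. P x) \<longleftrightarrow> (\<forall>x\<in>Z. P (x + k))" for P by auto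
    moreover have "(\<exists>y\<in>(\<lambda>z. z + k) ` Z. P y) \<longleftrightarrow> (\<exists>y\<in>Z. P (y + k))" for P by auto
    ultimately show ?thesis unfolding e1 by (simp add: add.commute add.left_commute card_shift_set)
  qed
  have mem: "u + k \<in> (\<lambda>z. z + k) ` Z \<longleftrightarrow> u \<in> Z" for u by auto
  have "Suc (lo + k) = Suc lo + k" by simp
  then show ?thesis unfolding good_def e1 e2 e3[unfolded e1] using mem[of lo] mem[of "Suc lo"] mem[of "hi-1"] mem[of hi]
    by (simp only:)
qed

lemma card_good_shift:
  assumes "hi \<ge> 1"
  shows "card {Z. good a (lo+k) (hi+k) Z} = card {Z. good a lo hi Z}"
proof -
  have "bij_betw (\<lambda>Z. (\<lambda>z. z + k) ` Z) {Z. good a lo hi Z} {Z. good a (lo+k) (hi+k) Z}"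
  proof (rule bij_betw_byWitness[where f' = "\<lambda>Z. (\<lambda>z. z - k) ` Z"])
    show "\<forall>Z\<in>{Z. good a lo hi Z}. (\<lambda>z. z - k) ` (\<lambda>z. z + k) ` Z = Z" by (auto simp: image_image)
    show "\<forall>Z\<in>{Z. good a (lo+k) (hi+k) Z}. (\<lambda>z. z + k) ` (\<lambda>z. z - k) ` Z = Z"
    proof
      fix Z assume "Z \<in> {Z. good a (lo+k) (hi+k) Z}"
      then have "Z \<subseteq> {lo+k..hi+k}" unfolding good_def by auto
      then have "\<forall>z\<in>Z. z - k + k = z" by auto
      then show "(\<lambda>z. z + k) ` (\<lambda>z. z - k) ` Z = Z" by (simp add: image_image)
    qed
    show "(\<lambda>Z. (\<lambda>z. z + k) ` Z) ` {Z. good a lo hi Z} \<subseteq> {Z. good a (lo+k) (hi+k) Z}"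
      using good_shift_iff[OF assms] by auto
    show "(\<lambda>Z. (\<lambda>z. z - k) ` Z) ` {Z. good a (lo+k) (hi+k) Z} \<subseteq> {Z. good a lo hi Z}"
    proof
      fix Z' assume "Z' \<in> (\<lambda>Z. (\<lambda>z. z - k) ` Z) ` {Z. good a (lo+k) (hi+k) Z}"
      then obtain Z where Z: "good a (lo+k) (hi+k) Z" "Z' = (\<lambda>z. z - k) ` Z" by auto
      then have "Z \<subseteq> {lo+k..hi+k}" unfolding good_def by auto
      then have "\<forall>z\<in>Z. z - k + k = z" by auto
      then have "(\<lambda>z. z + k) ` Z' = Z" using Z(2) by (simp add: image_image)
      then show "Z' \<in> {Z. good a lo hi Z}" using good_shift_iff[OF assms, of a lo k Z'] Z(1) by auto
    qed
  qed
  then show ?thesis by (simp add: bij_betw_same_card)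
qed



definition compo :: "nat \<Rightarrow> nat \<Rightarrow> nat set \<Rightarrow> bool" where
  "compo a l C \<longleftrightarrow> C \<subseteq> {0..l} \<and> 0 \<in> C \<and> l \<in> C \<and>
     (\<forall>x\<in>C. x < l \<longrightarrow> (\<forall>y. x < y \<and> y < x + a \<longrightarrow> y \<notin> C) \<and> (x + a \<in> C \<or> x + a + 1 \<in> C))"

definition gap :: "nat \<Rightarrow> nat set \<Rightarrow> nat \<Rightarrow> nat" where
  "gap a C x = (if x + a \<in> C then a else a + 1)"

definition buildrow :: "nat \<Rightarrow> nat \<Rightarrow> nat set \<Rightarrow> nat \<Rightarrow> (nat \<times> nat) set" where
  "buildrow a l C r = {(2 * x + r, gap a C x) | x. x \<in> C \<and> x < l}"

definition build :: "nat \<Rightarrow> nat \<Rightarrow> nat set \<Rightarrow> nat set \<Rightarrow> (nat \<times> nat) set" where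
  "build a l C0 C1 = buildrow a l C0 0 \<union> buildrow a l C1 1"

definition Brow :: "nat \<Rightarrow> (nat \<times> nat) set \<Rightarrow> nat \<Rightarrow> nat set" where
  "Brow l T r = {fst c div 2 | c. c \<in> T \<and> fst c mod 2 = r} \<union> {l}"

lemma mem_slots: "y \<in> comb_slots (s, t) \<longleftrightarrow> (\<exists>i<t. y = s + 2 * i)"
  unfolding comb_slots_def by auto

context
  fixes a l :: nat and T :: "(nat \<times> nat) set"
  assumes a1: "a \<ge> 1" and til: "is_tiling a (a + 1) l T"
begin

lemma til_len: "\<forall>c\<in>T. snd c \<in> {a, a + 1}"
  using til[unfolded is_tiling_def, THEN conjunct2, THEN conjunct1] .
lemma til_cov: "(\<Union>c\<in>T. comb_slots c) = {..<2 * l}"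
  using til[unfolded is_tiling_def, THEN conjunct2, THEN conjunct2, THEN conjunct1] .
lemma til_disj: "\<forall>c\<in>T. \<forall>d\<in>T. c \<noteq> d \<longrightarrow> comb_slots c \<inter> comb_slots d = {}"
  using til[unfolded is_tiling_def, THEN conjunct2, THEN conjunct2, THEN conjunct2] .
lemma til_fin: "finite T"
  using til[unfolded is_tiling_def, THEN conjunct1] .

lemma t_len: "(s, t) \<in> T \<Longrightarrow> t = a \<or> t = a + 1"
  using til_len by fastforce

lemma t_bound: assumes "(s, t) \<in> T" "i < t" shows "s + 2 * i < 2 * l"
proof -
  have "s + 2 * i \<in> comb_slots (s, t)" using assms(2) by (auto simp: mem_slots)
  then have "s + 2 * i \<in> (\<Union>c\<in>T. comb_slots c)" using assms(1) by blast
  then show ?thesis unfolding til_cov by simp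
qed

lemma t_bound2: assumes "(s, t) \<in> T" shows "s div 2 + t \<le> l"
proof -
  have "t \<ge> 1" using t_len[OF assms] a1 by auto
  then have h: "s + 2 * (t - 1) < 2 * l" using t_bound[OF assms, of "t - 1"] by simp
  have "s = 2 * (s div 2) + s mod 2" by simp
  moreover have "s mod 2 < 2" by simp
  ultimately show ?thesis using h \<open>t \<ge> 1\<close> by linarith
qed

lemma t_cover: assumes "y < 2 * l" shows "\<exists>s t i. (s, t) \<in> T \<and> i < t \<and> y = s + 2 * i"
proof -
  have "y \<in> (\<Union>c\<in>T. comb_slots c)" unfolding til_cov using assms by simp
  then obtain c where "c \<in> T" "y \<in> comb_slots c" by blast
  then show ?thesis by (cases c) (auto simp: mem_slots)
qed

lemma t_disj: assumes "(s, t) \<in> T" "(s', t') \<in> T" "i < t" "i' < t'" "s + 2 * i = s' + 2 * i'"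
  shows "s = s' \<and> t = t'"
proof (rule ccontr)
  assume "\<not> (s = s' \<and> t = t')"
  then have "(s, t) \<noteq> (s', t')" by simp
  then have "comb_slots (s, t) \<inter> comb_slots (s', t') = {}" using til_disj assms(1,2) by blast
  moreover have "s + 2 * i \<in> comb_slots (s, t)" "s + 2 * i \<in> comb_slots (s', t')"
    using assms by (auto simp: mem_slots)
  ultimately show False by blast
qed

lemma t_next: assumes "(s, t) \<in> T" "s + 2 * t < 2 * l" shows "\<exists>t'. (s + 2 * t, t') \<in> T"
proof -
  obtain s' t' i where c: "(s', t') \<in> T" "i < t'" "s + 2 * t = s' + 2 * i" using t_cover[OF assms(2)] by blast
  show ?thesis
  proof (cases i)
    case 0 then show ?thesis using c by auto
  next
    case (Suc j)
    have tpos: "t \<ge> 1" using t_len[OF assms(1)] a1 by auto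
    have "s + 2 * (t - 1) = s' + 2 * j" using c Suc tpos by simp
    then have "s = s' \<and> t = t'" using t_disj[OF assms(1) c(1), of "t - 1" j] tpos c Suc by simp
    then have False using c Suc by simp
    then show ?thesis ..
  qed
qed

lemma t_gapfree: assumes "(s, t) \<in> T" "(s', t') \<in> T" "s mod 2 = s' mod 2" "s < s'" "s' < s + 2 * t"
  shows False
proof -
  have "2 dvd (s' - s)" using assms(3,4) mod_eq_dvd_iff_nat[of s s' 2] by simp
  then obtain i where "s' - s = 2 * i" by (metis dvd_def)
  then have i: "s' = s + 2 * i" using assms(4) by simp
  have "i < t" using i assms(5) by simp
  moreover have "t' \<ge> 1" using t_len[OF assms(2)] a1 by auto
  ultimately have "s = s' \<and> t = t'" using t_disj[OF assms(1) assms(2), of i 0] i by simp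
  then show False using assms(4) by simp
qed

lemma Brow_mem: assumes "x \<in> Brow l T r" "x < l" "r < 2" shows "\<exists>t. (2 * x + r, t) \<in> T"
proof -
  from assms(1,2) obtain c where c: "c \<in> T" "fst c mod 2 = r" "x = fst c div 2" unfolding Brow_def by auto
  then have "fst c = 2 * x + r" using mult_div_mod_eq[of 2 "fst c"] by simp
  then show ?thesis using c by (metis prod.collapse)
qed

lemma Brow_in: assumes "(s, t) \<in> T" shows "s div 2 \<in> Brow l T (s mod 2)"
  unfolding Brow_def using assms by force

lemma comb_end: assumes "(2 * x + r, t) \<in> T" "r < 2" shows "x + t \<in> Brow l T r"
proof (cases "2 * x + r + 2 * t < 2 * l")
  case True
  then obtain t' where "(2 * x + r + 2 * t, t') \<in> T" using t_next[OF assms(1)] by blast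
  from Brow_in[OF this] show ?thesis using assms(2) by (simp add: add.commute)
next
  case False
  have "(2 * x + r) div 2 + t \<le> l" using t_bound2[OF assms(1)] .
  then have "x + t = l" using False assms(2) by simp
  then show ?thesis unfolding Brow_def by simp
qed

lemma comb_nomid: assumes "(2 * x + r, t) \<in> T" "r < 2" "x < y" "y < x + t" shows "y \<notin> Brow l T r"
proof
  assume y: "y \<in> Brow l T r"
  have "(2 * x + r) div 2 + t \<le> l" using t_bound2[OF assms(1)] .
  then have "y < l" using assms by simp
  then obtain t' where "(2 * y + r, t') \<in> T" using Brow_mem[OF y _ assms(2)] by blast
  then show False using t_gapfree[OF assms(1), of "2 * y + r" t'] assms by simp
qed

lemma Brow_comp: assumes "r < 2" shows "compo a l (Brow l T r)"
  unfolding compo_def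
proof (intro conjI ballI impI allI)
  show "Brow l T r \<subseteq> {0..l}"
  proof
    fix x assume "x \<in> Brow l T r"
    then consider "x = l" | c where "c \<in> T" "x = fst c div 2" unfolding Brow_def by auto
    then show "x \<in> {0..l}"
    proof cases
      case 2 then show ?thesis using t_bound2[of "fst c" "snd c"] by auto
    qed simp
  qed
  show "l \<in> Brow l T r" unfolding Brow_def by simp
  show "0 \<in> Brow l T r"
  proof (cases "l = 0")
    case True then show ?thesis unfolding Brow_def by simp
  next
    case False
    then have "r < 2 * l" using assms by simp
    then obtain s t i where c: "(s, t) \<in> T" "i < t" "r = s + 2 * i" using t_cover by blast
    then have "i = 0" using assms by simp
    then have "s = r" using c by simp
    then show ?thesis using Brow_in[OF c(1)] assms by simp
  qed
  fix x assume x: "x \<in> Brow l T r" "x < l"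
  obtain t where t: "(2 * x + r, t) \<in> T" using Brow_mem[OF x assms] by blast
  have tl: "t = a \<or> t = a + 1" using t_len[OF t] .
  show "x + a \<in> Brow l T r \<or> x + a + 1 \<in> Brow l T r" using comb_end[OF t assms] tl by auto
  fix y assume "x < y \<and> y < x + a"
  then show "y \<notin> Brow l T r" using comb_nomid[OF t assms, of y] tl by auto
qed

lemma tile_gap: assumes "(2 * x + r, t) \<in> T" "r < 2" shows "gap a (Brow l T r) x = t"
proof -
  have tl: "t = a \<or> t = a + 1" using t_len[OF assms(1)] .
  show ?thesis
  proof (cases "t = a")
    case True then show ?thesis using comb_end[OF assms] by (simp add: gap_def)
  next
    case False
    then have "t = a + 1" using tl by simp
    then have "x + a \<notin> Brow l T r" using comb_nomid[OF assms, of "x + a"] a1 by simp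
    then show ?thesis using \<open>t = a + 1\<close> by (simp add: gap_def)
  qed
qed

lemma build_Brow: "build a l (Brow l T 0) (Brow l T 1) = T"
proof
  show "build a l (Brow l T 0) (Brow l T 1) \<subseteq> T"
  proof
    fix c assume c: "c \<in> build a l (Brow l T 0) (Brow l T 1)"
    have h: "(2 * x + r, gap a (Brow l T r) x) \<in> T" if xr: "x \<in> Brow l T r" "x < l" "r < 2" for x r
    proof -
      obtain t where t: "(2 * x + r, t) \<in> T" using Brow_mem[OF xr] by blast
      show ?thesis using tile_gap[OF t xr(3)] t by simp
    qed
    from c consider x where "x \<in> Brow l T 0" "x < l" "c = (2 * x + 0, gap a (Brow l T 0) x)"
      | x where "x \<in> Brow l T 1" "x < l" "c = (2 * x + 1, gap a (Brow l T 1) x)"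
      unfolding build_def buildrow_def by auto
    then show "c \<in> T"
    proof cases
      case 1 then show ?thesis using h[of x 0] by simp
    next
      case 2 then show ?thesis using h[of x 1] by simp
    qed
  qed
next
  show "T \<subseteq> build a l (Brow l T 0) (Brow l T 1)"
  proof
    fix c assume c: "c \<in> T"
    obtain s t where st: "c = (s, t)" by (cases c)
    define x r where "x = s div 2" and "r = s mod 2"
    have s: "s = 2 * x + r" and r: "r < 2" unfolding x_def r_def by auto
    have xl: "x < l" using t_bound2[of s t] c st t_len[of s t] a1 unfolding x_def by fastforce
    have xB: "x \<in> Brow l T r" using Brow_in[of s t] c st unfolding x_def r_def by simp
    have g: "gap a (Brow l T r) x = t" using tile_gap[of x r t] c st s r by simp
    have "r = 0 \<or> r = 1" using r by auto
    then show "c \<in> build a l (Brow l T 0) (Brow l T 1)"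
      unfolding build_def buildrow_def using st s g xB xl by auto
  qed
qed

lemma cut_iff: "is_cut_point l T x \<longleftrightarrow> 0 < x \<and> x < l \<and> x \<in> Brow l T 0 \<and> x \<in> Brow l T 1"
proof
  assume cut: "is_cut_point l T x"
  then have x: "0 < x" "x < l" unfolding is_cut_point_def by auto
  have "x \<in> Brow l T r" if r: "r < 2" for r
  proof -
    have "2 * x + r < 2 * l" using x r by simp
    then obtain s t i where c: "(s, t) \<in> T" "i < t" "2 * x + r = s + 2 * i" using t_cover by blast
    have "2 * x + r \<in> comb_slots (s, t)" using c by (auto simp: mem_slots)
    moreover have "comb_slots (s, t) \<subseteq> {..<2 * x} \<or> comb_slots (s, t) \<subseteq> {2 * x..}"
      using cut c(1) unfolding is_cut_point_def by blast
    ultimately have "comb_slots (s, t) \<subseteq> {2 * x..}" by auto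
    moreover have "s \<in> comb_slots (s, t)" using c by (auto simp: mem_slots)
    ultimately have "s \<ge> 2 * x" by auto
    then have "i = 0" using c r by simp
    then have "s = 2 * x + r" using c by simp
    then show ?thesis using Brow_in[OF c(1)] r by simp
  qed
  then show "0 < x \<and> x < l \<and> x \<in> Brow l T 0 \<and> x \<in> Brow l T 1" using x by simp
next
  assume h: "0 < x \<and> x < l \<and> x \<in> Brow l T 0 \<and> x \<in> Brow l T 1"
  show "is_cut_point l T x"
    unfolding is_cut_point_def
  proof (intro conjI ballI)
    show "0 < x" "x < l" using h by auto
    fix c assume c: "c \<in> T"
    obtain s t where st: "c = (s, t)" by (cases c)
    define y r where "y = s div 2" and "r = s mod 2"
    have s: "s = 2 * y + r" and r: "r < 2" unfolding y_def r_def by auto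
    have ct: "(2 * y + r, t) \<in> T" using c st s by simp
    have "r = 0 \<or> r = 1" using r by auto
    then have xB: "x \<in> Brow l T r" using h by auto
    show "comb_slots c \<subseteq> {..<2 * x} \<or> comb_slots c \<subseteq> {2 * x..}"
    proof (cases "x \<le> y")
      case True
      then have "comb_slots c \<subseteq> {2 * x..}" using st s by (auto simp: mem_slots)
      then show ?thesis ..
    next
      case False
      have "\<not> (y < x \<and> x < y + t)" using comb_nomid[OF ct r, of x] xB by auto
      then have "y + t \<le> x" using False by simp
      then have "comb_slots c \<subseteq> {..<2 * x}" using st s r by (auto simp: mem_slots)
      then show ?thesis ..
    qed
  qed
qed

end



lemma comp_sub: "compo a l C \<Longrightarrow> C \<subseteq> {0..l}" unfolding compo_def by (elim conjE)
lemma comp_fin: assumes "compo a l C" shows "finite C" using comp_sub[OF assms] by (rule finite_subset) simp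
lemma comp_0: "compo a l C \<Longrightarrow> 0 \<in> C" unfolding compo_def by (elim conjE)
lemma comp_l: "compo a l C \<Longrightarrow> l \<in> C" unfolding compo_def by (elim conjE)

lemma comp_gap:
  assumes c: "compo a l C" and a1: "a \<ge> 1" and x: "x \<in> C" "x < l"
  shows "x + gap a C x \<in> C \<and> (\<forall>y. x < y \<and> y < x + gap a C x \<longrightarrow> y \<notin> C) \<and> (gap a C x = a \<or> gap a C x = a + 1)"
proof -
  have h: "(\<forall>y. x < y \<and> y < x + a \<longrightarrow> y \<notin> C) \<and> (x + a \<in> C \<or> x + a + 1 \<in> C)"
    using c x unfolding compo_def by blast
  show ?thesis
  proof (cases "x + a \<in> C")
    case True then show ?thesis using h by (simp add: gap_def)
  next
    case False
    have "\<forall>y. x < y \<and> y < x + (a + 1) \<longrightarrow> y \<notin> C"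
    proof (intro allI impI)
      fix y assume y: "x < y \<and> y < x + (a + 1)"
      then have "y < x + a \<or> y = x + a" by auto
      then show "y \<notin> C" using h False y by blast
    qed
    then show ?thesis using h False by (simp add: gap_def)
  qed
qed

lemma comp_gap_le:
  assumes c: "compo a l C" and a1: "a \<ge> 1" and x: "x \<in> C" "x < l"
  shows "x + gap a C x \<le> l"
  using comp_gap[OF assms] comp_sub[OF c] by auto

lemma buildrow_img: "buildrow a l C r = (\<lambda>x. (2 * x + r, gap a C x)) ` {x\<in>C. x < l}"
  unfolding buildrow_def by auto

lemma row_cover:
  assumes c: "compo a l C" and a1: "a \<ge> 1" and y: "y < 2 * l" "y mod 2 = r"
  shows "\<exists>x\<in>C. x < l \<and> y \<in> comb_slots (2 * x + r, gap a C x)"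
proof -
  define q where "q = y div 2"
  have yq: "y = 2 * q + r" unfolding q_def using y(2) mult_div_mod_eq[of 2 y] by simp
  have ql: "q < l" using y unfolding q_def by simp
  define S where "S = {x\<in>C. x \<le> q}"
  have finS: "finite S" unfolding S_def using comp_fin[OF c] by simp
  have neS: "S \<noteq> {}" unfolding S_def using comp_0[OF c] by auto
  define x where "x = Max S"
  have xS: "x \<in> S" unfolding x_def using Max_in[OF finS neS] .
  then have xC: "x \<in> C" "x \<le> q" unfolding S_def by auto
  have xl: "x < l" using xC ql by simp
  have g: "x + gap a C x \<in> C" using comp_gap[OF c a1 xC(1) xl] by blast
  have gpos: "gap a C x \<ge> 1" using a1 by (simp add: gap_def)
  have "q < x + gap a C x"
  proof (rule ccontr)
    assume "\<not> q < x + gap a C x"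
    then have "x + gap a C x \<in> S" using g unfolding S_def by simp
    then have "x + gap a C x \<le> x" unfolding x_def using Max_ge[OF finS] by blast
    then show False using gpos by simp
  qed
  then have "y \<in> comb_slots (2 * x + r, gap a C x)" using yq xC unfolding mem_slots
    by (intro exI[of _ "q - x"]) auto
  then show ?thesis using xC xl by blast
qed

lemma row_slot_bound:
  assumes c: "compo a l C" and a1: "a \<ge> 1" and x: "x \<in> C" "x < l" and r: "r < 2"
    and y: "y \<in> comb_slots (2 * x + r, gap a C x)"
  shows "y < 2 * l \<and> y mod 2 = r \<and> y div 2 \<ge> x \<and> y div 2 < x + gap a C x"
proof -
  obtain i where i: "i < gap a C x" "y = 2 * x + r + 2 * i" using y unfolding mem_slots by auto
  have "x + gap a C x \<le> l" using comp_gap_le[OF c a1 x] .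
  then show ?thesis using i r by auto
qed

context
  fixes a l :: nat and C0 C1 :: "nat set"
  assumes a1: "a \<ge> 1" and c0: "compo a l C0" and c1: "compo a l C1"
begin

definition CC :: "nat \<Rightarrow> nat set" where "CC r = (if r = 0 then C0 else C1)"

lemma cc_comp: "compo a l (CC r)" unfolding CC_def using c0 c1 by simp

lemma build_alt: "build a l C0 C1 = {(2 * x + r, gap a (CC r) x) | x r. r < 2 \<and> x \<in> CC r \<and> x < l}"
proof -
  have r01: "r < 2 \<Longrightarrow> r = 0 \<or> r = 1" for r :: nat by auto
  show ?thesis
  proof
    show "build a l C0 C1 \<subseteq> {(2 * x + r, gap a (CC r) x) | x r. r < 2 \<and> x \<in> CC r \<and> x < l}"
    proof
      fix c assume "c \<in> build a l C0 C1"
      then consider x where "x \<in> C0" "x < l" "c = (2 * x + 0, gap a (CC 0) x)"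
        | x where "x \<in> C1" "x < l" "c = (2 * x + 1, gap a (CC 1) x)"
        unfolding build_def buildrow_def CC_def by auto
      then show "c \<in> {(2 * x + r, gap a (CC r) x) | x r. r < 2 \<and> x \<in> CC r \<and> x < l}"
      proof cases
        case 1 then show ?thesis unfolding CC_def by (intro CollectI exI[of _ x] exI[of _ 0]) simp
      next
        case 2 then show ?thesis unfolding CC_def by (intro CollectI exI[of _ x] exI[of _ 1]) simp
      qed
    qed
  next
    show "{(2 * x + r, gap a (CC r) x) | x r. r < 2 \<and> x \<in> CC r \<and> x < l} \<subseteq> build a l C0 C1"
    proof
      fix c assume "c \<in> {(2 * x + r, gap a (CC r) x) | x r. r < 2 \<and> x \<in> CC r \<and> x < l}"
      then obtain x r where xr: "r < 2" "x \<in> CC r" "x < l" "c = (2 * x + r, gap a (CC r) x)" by blast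
      show "c \<in> build a l C0 C1"
      proof (cases "r = 0")
        case True then show ?thesis using xr unfolding build_def buildrow_def CC_def by auto
      next
        case False then have "r = 1" using r01 xr(1) by blast
        then show ?thesis using xr unfolding build_def buildrow_def CC_def by auto
      qed
    qed
  qed
qed

lemma build_tiling: "is_tiling a (a + 1) l (build a l C0 C1)"
  unfolding is_tiling_def
proof (intro conjI ballI impI)
  show "finite (build a l C0 C1)" unfolding build_def buildrow_img using comp_fin[OF c0] comp_fin[OF c1] by simp
  fix c assume "c \<in> build a l C0 C1"
  then obtain x r where "c = (2 * x + r, gap a (CC r) x)" unfolding build_alt by blast
  then show "snd c \<in> {a, a + 1}" by (simp add: gap_def)
next
  show "(\<Union>c\<in>build a l C0 C1. comb_slots c) = {..<2 * l}"
  proof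
    show "(\<Union>c\<in>build a l C0 C1. comb_slots c) \<subseteq> {..<2 * l}"
    proof
      fix y assume "y \<in> (\<Union>c\<in>build a l C0 C1. comb_slots c)"
      then obtain x r where xr: "r < 2" "x \<in> CC r" "x < l" "y \<in> comb_slots (2 * x + r, gap a (CC r) x)"
        unfolding build_alt by blast
      show "y \<in> {..<2 * l}" using row_slot_bound[OF cc_comp a1 xr(2,3,1,4)] by simp
    qed
  next
    show "{..<2 * l} \<subseteq> (\<Union>c\<in>build a l C0 C1. comb_slots c)"
    proof
      fix y assume "y \<in> {..<2 * l}"
      then obtain x where x: "x \<in> CC (y mod 2)" "x < l" "y \<in> comb_slots (2 * x + y mod 2, gap a (CC (y mod 2)) x)"
        using row_cover[OF cc_comp a1, of y "y mod 2"] by auto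
      then have "(2 * x + y mod 2, gap a (CC (y mod 2)) x) \<in> build a l C0 C1"
        unfolding build_alt by (intro CollectI exI[of _ x] exI[of _ "y mod 2"]) auto
      then show "y \<in> (\<Union>c\<in>build a l C0 C1. comb_slots c)" using x(3) by blast
    qed
  qed
next
  fix c d assume c: "c \<in> build a l C0 C1" and d: "d \<in> build a l C0 C1" and cd: "c \<noteq> d"
  show "comb_slots c \<inter> comb_slots d = {}"
  proof (rule ccontr)
    assume "comb_slots c \<inter> comb_slots d \<noteq> {}"
    then obtain y where y: "y \<in> comb_slots c" "y \<in> comb_slots d" by blast
    obtain x r where xr: "r < 2" "x \<in> CC r" "x < l" "c = (2 * x + r, gap a (CC r) x)"
      using c unfolding build_alt by blast
    obtain x' r' where xr': "r' < 2" "x' \<in> CC r'" "x' < l" "d = (2 * x' + r', gap a (CC r') x')"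
      using d unfolding build_alt by blast
    have b1: "y mod 2 = r \<and> y div 2 \<ge> x \<and> y div 2 < x + gap a (CC r) x"
      using row_slot_bound[OF cc_comp a1 xr(2,3,1)] y(1) xr(4) by blast
    have b2: "y mod 2 = r' \<and> y div 2 \<ge> x' \<and> y div 2 < x' + gap a (CC r') x'"
      using row_slot_bound[OF cc_comp a1 xr'(2,3,1)] y(2) xr'(4) by blast
    have rr: "r' = r" using b1 b2 by simp
    have "x \<noteq> x'" using cd xr(4) xr'(4) rr by auto
    then consider "x < x'" | "x' < x" by linarith
    then show False
    proof cases
      case 1
      have "x' \<notin> CC r" using comp_gap[OF cc_comp a1 xr(2,3)] 1 b1 b2 by auto
      then show False using xr'(2) rr by simp
    next
      case 2
      have "x \<notin> CC r" using comp_gap[OF cc_comp a1 xr'(2,3)] 2 b1 b2 rr by auto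
      then show False using xr(2) by simp
    qed
  qed
qed

lemma Brow_build: "r < 2 \<Longrightarrow> Brow l (build a l C0 C1) r = CC r"
proof -
  assume r: "r < 2"
  have "{fst c div 2 | c. c \<in> build a l C0 C1 \<and> fst c mod 2 = r} = {x\<in>CC r. x < l}"
  proof
    show "{fst c div 2 | c. c \<in> build a l C0 C1 \<and> fst c mod 2 = r} \<subseteq> {x\<in>CC r. x < l}"
    proof
      fix z assume "z \<in> {fst c div 2 | c. c \<in> build a l C0 C1 \<and> fst c mod 2 = r}"
      then obtain c where c: "c \<in> build a l C0 C1" "fst c mod 2 = r" "z = fst c div 2" by blast
      from c(1) obtain x r' where xr: "r' < 2" "x \<in> CC r'" "x < l" "c = (2 * x + r', gap a (CC r') x)"
        unfolding build_alt by blast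
      have "r' = r" using xr c by simp
      moreover have "z = x" using xr c by simp
      ultimately show "z \<in> {x\<in>CC r. x < l}" using xr by simp
    qed
    show "{x\<in>CC r. x < l} \<subseteq> {fst c div 2 | c. c \<in> build a l C0 C1 \<and> fst c mod 2 = r}"
    proof
      fix x assume x: "x \<in> {x\<in>CC r. x < l}"
      have mem: "(2 * x + r, gap a (CC r) x) \<in> build a l C0 C1" unfolding build_alt using x r by blast
      show "x \<in> {fst c div 2 | c. c \<in> build a l C0 C1 \<and> fst c mod 2 = r}"
        by (rule CollectI, rule exI[of _ "(2 * x + r, gap a (CC r) x)"]) (use mem r in simp)
    qed
  qed
  moreover have "{x\<in>CC r. x < l} \<union> {l} = CC r" using comp_sub[OF cc_comp, of r] comp_l[OF cc_comp, of r] by auto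
  ultimately show ?thesis unfolding Brow_def by simp
qed

lemma Brow_build0: "Brow l (build a l C0 C1) 0 = C0" using Brow_build[of 0] unfolding CC_def by simp
lemma Brow_build1: "Brow l (build a l C0 C1) 1 = C1" using Brow_build[of 1] unfolding CC_def by simp

end



lemma metatile_mixed:
  assumes a1: "a \<ge> 1" and l: "l \<ge> 2 * a + 1" and til: "is_tiling a (a + 1) l T"
    and nc: "\<forall>x. \<not> is_cut_point l T x"
  shows "is_mixed T"
proof (rule ccontr)
  assume nm: "\<not> is_mixed T"
  have l0: "0 < l" using l by simp
  have b0: "0 \<in> Brow l T r" if "r < 2" for r
    using Brow_comp[OF a1 til that] unfolding compo_def by (elim conjE)
  obtain t0 where t0: "(2 * 0 + 0, t0) \<in> T" using Brow_mem[OF a1 til b0[of 0] l0] by auto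
  obtain t1 where t1: "(2 * 0 + 1, t1) \<in> T" using Brow_mem[OF a1 til b0[of 1] l0] by auto
  have "t0 = t1" using nm t0 t1 unfolding is_mixed_def by fastforce
  have e0: "0 + t0 \<in> Brow l T 0" using comb_end[OF a1 til t0] by simp
  have e1: "0 + t0 \<in> Brow l T 1" using comb_end[OF a1 til t1] \<open>t0 = t1\<close> by simp
  have tl: "t0 = a \<or> t0 = a + 1" using t_len[OF a1 til t0] .
  have "is_cut_point l T t0" using cut_iff[OF a1 til, of t0] e0 e1 tl a1 l by auto
  then show False using nc by blast
qed

lemma card_metatiles_pairs:
  assumes a1: "a \<ge> 1" and l: "l \<ge> 2 * a + 1"
  shows "card {T. is_metatile a (a + 1) l T \<and> is_mixed T} =
    card {(C0, C1). compo a l C0 \<and> compo a l C1 \<and> (\<forall>x. 0 < x \<and> x < l \<longrightarrow> \<not> (x \<in> C0 \<and> x \<in> C1))}"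
proof -
  let ?M = "{T. is_metatile a (a + 1) l T \<and> is_mixed T}"
  let ?Q = "{(C0, C1). compo a l C0 \<and> compo a l C1 \<and> (\<forall>x. 0 < x \<and> x < l \<longrightarrow> \<not> (x \<in> C0 \<and> x \<in> C1))}"
  have "bij_betw (\<lambda>T. (Brow l T 0, Brow l T 1)) ?M ?Q"
  proof (rule bij_betw_byWitness[where f' = "\<lambda>(C0, C1). build a l C0 C1"])
    show "\<forall>T\<in>?M. (\<lambda>(C0, C1). build a l C0 C1) (Brow l T 0, Brow l T 1) = T"
      using build_Brow[OF a1] unfolding is_metatile_def by auto
    show "\<forall>p\<in>?Q. (\<lambda>T. (Brow l T 0, Brow l T 1)) ((\<lambda>(C0, C1). build a l C0 C1) p) = p"
    proof
      fix p assume "p \<in> ?Q"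
      then obtain C0 C1 where p: "p = (C0, C1)" "compo a l C0" "compo a l C1" by auto
      show "(\<lambda>T. (Brow l T 0, Brow l T 1)) ((\<lambda>(C0, C1). build a l C0 C1) p) = p"
        using Brow_build0[OF a1 p(2,3)] Brow_build1[OF a1 p(2,3)] p(1) by simp
    qed
    show "(\<lambda>T. (Brow l T 0, Brow l T 1)) ` ?M \<subseteq> ?Q"
    proof
      fix q assume "q \<in> (\<lambda>T. (Brow l T 0, Brow l T 1)) ` ?M"
      then obtain T where T: "is_metatile a (a + 1) l T" "q = (Brow l T 0, Brow l T 1)" by auto
      have til: "is_tiling a (a + 1) l T" and nc: "\<forall>x. \<not> is_cut_point l T x" using T(1) unfolding is_metatile_def by auto
      have "\<forall>x. 0 < x \<and> x < l \<longrightarrow> \<not> (x \<in> Brow l T 0 \<and> x \<in> Brow l T 1)" using cut_iff[OF a1 til] nc by blast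
      then show "q \<in> ?Q" using Brow_comp[OF a1 til, of 0] Brow_comp[OF a1 til, of 1] T(2) by simp
    qed
    show "(\<lambda>(C0, C1). build a l C0 C1) ` ?Q \<subseteq> ?M"
    proof
      fix T assume "T \<in> (\<lambda>(C0, C1). build a l C0 C1) ` ?Q"
      then obtain C0 C1 where p: "compo a l C0" "compo a l C1" "\<forall>x. 0 < x \<and> x < l \<longrightarrow> \<not> (x \<in> C0 \<and> x \<in> C1)"
        "T = build a l C0 C1" by auto
      have til: "is_tiling a (a + 1) l T" using build_tiling[OF a1 p(1,2)] p(4) by simp
      have B0: "Brow l T 0 = C0" using Brow_build0[OF a1 p(1,2)] p(4) by simp
      have B1: "Brow l T 1 = C1" using Brow_build1[OF a1 p(1,2)] p(4) by simp
      have nc: "\<forall>x. \<not> is_cut_point l T x" using cut_iff[OF a1 til] B0 B1 p(3) by blast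
      have "is_mixed T" using metatile_mixed[OF a1 l til nc] .
      then show "T \<in> ?M" using til nc unfolding is_metatile_def by simp
    qed
  qed
  then show ?thesis by (rule bij_betw_same_card)
qed



definition rw :: "nat set \<Rightarrow> nat \<Rightarrow> nat \<Rightarrow> nat" where
  "rw Z b z = (card {w\<in>Z. w \<le> z} + 1 + b) mod 2"

definition rowset :: "nat \<Rightarrow> nat set \<Rightarrow> nat \<Rightarrow> nat \<Rightarrow> nat set" where
  "rowset l Z b r = {0, l} \<union> {z\<in>Z. rw Z b z = r}"

lemma compo_pred:
  assumes c: "compo a l C" and a1: "a \<ge> 1" and z: "z \<in> C" "0 < z"
  shows "\<exists>p\<in>C. p < z \<and> p + gap a C p = z"
proof -
  define S where "S = {w\<in>C. w < z}"
  have finS: "finite S" unfolding S_def using comp_fin[OF c] by simp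
  have neS: "S \<noteq> {}" unfolding S_def using comp_0[OF c] z by auto
  define p where "p = Max S"
  have pS: "p \<in> S" unfolding p_def using Max_in[OF finS neS] .
  then have pC: "p \<in> C" "p < z" unfolding S_def by auto
  have zl: "z \<le> l" using comp_sub[OF c] z by auto
  have pl: "p < l" using pC zl by simp
  have g: "p + gap a C p \<in> C" "\<forall>y. p < y \<and> y < p + gap a C p \<longrightarrow> y \<notin> C"
    using comp_gap[OF c a1 pC(1) pl] by blast+
  have gpos: "gap a C p \<ge> 1" using a1 by (simp add: gap_def)
  have "\<not> p + gap a C p < z"
  proof
    assume "p + gap a C p < z"
    then have "p + gap a C p \<in> S" using g unfolding S_def by simp
    then have "p + gap a C p \<le> p" unfolding p_def using Max_ge[OF finS] by blast
    then show False using gpos by simp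
  qed
  moreover have "\<not> z < p + gap a C p" using g(2) pC z(1) by blast
  ultimately show ?thesis using pC by (intro bexI[of _ p]) auto
qed

lemma compo_sep:
  assumes c: "compo a l C" and x: "x \<in> C" and y: "y \<in> C" and xy: "x < y"
  shows "x + a \<le> y"
proof -
  have "y \<le> l" using comp_sub[OF c] y by auto
  then have "x < l" using xy by simp
  then have "\<forall>v. x < v \<and> v < x + a \<longrightarrow> v \<notin> C" using c x unfolding compo_def by blast
  then show ?thesis using y xy by (meson not_less)
qed

lemma compo_low:
  assumes c: "compo a l C" and z: "z \<in> C" "z \<noteq> 0"
  shows "a \<le> z"
  using compo_sep[OF c comp_0[OF c] z(1)] z(2) by simp

lemma compo_high:
  assumes c: "compo a l C" and a1: "a \<ge> 1" and z: "z \<in> C" "z < l"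
  shows "z + a \<le> l"
proof -
  have "gap a C z = a \<or> gap a C z = a + 1" using comp_gap[OF c a1 z] by blast
  then show ?thesis using comp_gap_le[OF c a1 z] by linarith
qed

context
  fixes a l :: nat and C0 C1 :: "nat set"
  assumes a1: "a \<ge> 1" and l: "l \<ge> 2 * a + 1" and c0: "compo a l C0" and c1: "compo a l C1"
    and nc: "\<forall>x. 0 < x \<and> x < l \<longrightarrow> \<not> (x \<in> C0 \<and> x \<in> C1)"
begin

definition DD :: "nat \<Rightarrow> nat set" where "DD r = (if r = 0 then C0 else C1)"
definition ZZ :: "nat set" where "ZZ = (C0 \<union> C1) - {0, l}"

lemma dd_comp: "compo a l (DD r)" unfolding DD_def using c0 c1 by simp

lemma dd_nc: "r < 2 \<Longrightarrow> x \<in> DD r \<Longrightarrow> 0 < x \<Longrightarrow> x < l \<Longrightarrow> x \<notin> DD (1 - r)"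
  using nc unfolding DD_def by (cases "r = 0") auto

lemma ZZ_sub: "ZZ \<subseteq> {a..l - a}"
proof
  fix z assume z: "z \<in> ZZ"
  have "z \<in> DD 0 \<or> z \<in> DD 1" using z unfolding ZZ_def DD_def by auto
  then obtain r where r: "r < 2" "z \<in> DD r"
  proof (elim disjE)
    assume "z \<in> DD 0" then show ?thesis using that[of 0] by simp
  next
    assume "z \<in> DD 1" then show ?thesis using that[of 1] by simp
  qed
  have "z \<noteq> 0" "z \<noteq> l" using z unfolding ZZ_def by auto
  moreover have "z \<le> l" using comp_sub[OF dd_comp, of r] r(2) by (simp add: subset_iff)
  ultimately show "z \<in> {a..l - a}" using compo_low[OF dd_comp r(2)] compo_high[OF dd_comp a1 r(2)] by auto
qed

lemma ZZ_fin: "finite ZZ" using ZZ_sub finite_subset by blast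

lemma ZZ_row: "z \<in> ZZ \<Longrightarrow> \<exists>r<2. z \<in> DD r \<and> z \<notin> DD (1 - r)"
proof -
  assume z: "z \<in> ZZ"
  then have z0: "0 < z" "z < l" using ZZ_sub a1 l by fastforce+
  have "z \<in> DD 0 \<or> z \<in> DD 1" using z unfolding ZZ_def DD_def by auto
  then obtain r where r: "r < 2" "z \<in> DD r"
  proof (elim disjE)
    assume "z \<in> DD 0" then show ?thesis using that[of 0] by simp
  next
    assume "z \<in> DD 1" then show ?thesis using that[of 1] by simp
  qed
  then show ?thesis using dd_nc[OF r z0] by blast
qed

lemma first_two:
  "(a \<in> C0 \<and> a + 1 \<in> C1 \<and> a \<notin> C1 \<and> a + 1 \<notin> C0) \<or> (a \<in> C1 \<and> a + 1 \<in> C0 \<and> a \<notin> C0 \<and> a + 1 \<notin> C1)"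
proof -
  have l0: "0 < l" using l by simp
  have g0: "gap a C0 0 \<in> C0" "gap a C0 0 = a \<or> gap a C0 0 = a + 1" using comp_gap[OF c0 a1 comp_0[OF c0] l0] by simp_all
  have g1: "gap a C1 0 \<in> C1" "gap a C1 0 = a \<or> gap a C1 0 = a + 1" using comp_gap[OF c1 a1 comp_0[OF c1] l0] by simp_all
  have ne: "gap a C0 0 \<noteq> gap a C1 0"
  proof
    assume e: "gap a C0 0 = gap a C1 0"
    have "0 < gap a C0 0" "gap a C0 0 < l" using g0(2) a1 l by linarith+
    then have "\<not> (gap a C0 0 \<in> C0 \<and> gap a C0 0 \<in> C1)" using nc by simp
    then show False using g0(1) g1(1) e by simp
  qed
  have A0: "a \<in> C0 \<Longrightarrow> gap a C0 0 = a" "a \<notin> C0 \<Longrightarrow> gap a C0 0 = a + 1" by (auto simp: gap_def)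
  have A1: "a \<in> C1 \<Longrightarrow> gap a C1 0 = a" "a \<notin> C1 \<Longrightarrow> gap a C1 0 = a + 1" by (auto simp: gap_def)
  have "0 < a" "a < l" "0 < a + 1" "a + 1 < l" using a1 l by auto
  then have nca: "\<not> (a \<in> C0 \<and> a \<in> C1)" "\<not> (a + 1 \<in> C0 \<and> a + 1 \<in> C1)" using nc by blast+
  show ?thesis
  proof (cases "a \<in> C0")
    case True
    then have "gap a C0 0 = a" using A0 by simp
    then have "gap a C1 0 = a + 1" using ne g1(2) by simp
    then have "a + 1 \<in> C1" using g1(1) by simp
    then show ?thesis using True nca by blast
  next
    case False
    then have "gap a C0 0 = a + 1" using A0 by simp
    then have "a + 1 \<in> C0" using g0(1) by simp
    have "gap a C1 0 = a" using ne g1(2) \<open>gap a C0 0 = a + 1\<close> by simp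
    then have "a \<in> C1" using g1(1) by simp
    then show ?thesis using False nca \<open>a + 1 \<in> C0\<close> by blast
  qed
qed

lemma first_in: "a \<in> ZZ" "a + 1 \<in> ZZ"
  using first_two a1 l unfolding ZZ_def by auto

lemma last_in: "l - a - 1 \<in> ZZ" "l - a \<in> ZZ"
proof -
  have l0: "0 < l" using l by simp
  obtain p0 where p0: "p0 \<in> C0" "p0 < l" "p0 + gap a C0 p0 = l" using compo_pred[OF c0 a1 comp_l[OF c0] l0] by blast
  obtain p1 where p1: "p1 \<in> C1" "p1 < l" "p1 + gap a C1 p1 = l" using compo_pred[OF c1 a1 comp_l[OF c1] l0] by blast
  have q0: "p0 = l - a \<or> p0 = l - a - 1" using p0(3) by (auto simp: gap_def split: if_splits)
  have q1: "p1 = l - a \<or> p1 = l - a - 1" using p1(3) by (auto simp: gap_def split: if_splits)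
  have pos: "0 < p0" "0 < p1" using q0 q1 l a1 by auto
  have "p0 \<noteq> p1"
  proof
    assume "p0 = p1"
    then have "p0 \<in> C0 \<and> p0 \<in> C1" using p0 p1 by simp
    then show False using nc[rule_format, of p0] pos p0 by simp
  qed
  then have "{p0, p1} = {l - a - 1, l - a}" using q0 q1 by auto
  moreover have "p0 \<in> ZZ" "p1 \<in> ZZ" using p0 p1 pos unfolding ZZ_def by auto
  ultimately show "l - a - 1 \<in> ZZ" "l - a \<in> ZZ" by auto
qed

lemma mid_card:
  assumes r: "r < 2" and x: "x \<in> DD r" "x \<in> ZZ" and yl: "x + gap a (DD r) x < l"
  shows "card {w\<in>ZZ. x < w \<and> w < x + gap a (DD r) x} = 1"
proof -
  define y where "y = x + gap a (DD r) x"
  have x0: "0 < x" "x < l" using x(2) ZZ_sub a1 l by fastforce+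
  have g: "y \<in> DD r" "\<forall>v. x < v \<and> v < y \<longrightarrow> v \<notin> DD r" "y = x + a \<or> y = x + a + 1"
    using comp_gap[OF dd_comp a1 x(1) x0(2)] unfolding y_def by auto
  have xo: "x \<notin> DD (1 - r)" using dd_nc[OF r x(1) x0] .
  have co: "compo a l (DD (1 - r))" using dd_comp .
  define S where "S = {w\<in>DD (1 - r). w \<le> x}"
  have finS: "finite S" unfolding S_def using comp_fin[OF co] by simp
  have neS: "S \<noteq> {}" unfolding S_def using comp_0[OF co] by auto
  define p where "p = Max S"
  have pS: "p \<in> S" unfolding p_def using Max_in[OF finS neS] .
  then have pC: "p \<in> DD (1 - r)" "p \<le> x" unfolding S_def by auto
  have px: "p < x" using pC xo by (cases "p = x") auto
  have pl: "p < l" using px x0 by simp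
  define w0 where "w0 = p + gap a (DD (1 - r)) p"
  have gw: "w0 \<in> DD (1 - r)" "w0 = p + a \<or> w0 = p + a + 1"
    using comp_gap[OF co a1 pC(1) pl] unfolding w0_def by auto
  have w0x: "x < w0"
  proof (rule ccontr)
    assume "\<not> x < w0"
    then have "w0 \<in> S" using gw unfolding S_def by simp
    then have "w0 \<le> p" unfolding p_def using Max_ge[OF finS] by blast
    then show False using gw a1 by auto
  qed
  have w0y: "w0 < y"
  proof (rule ccontr)
    assume "\<not> w0 < y"
    then have "y = x + a" "w0 = y" using gw g(3) px by auto
    moreover have "0 < y" "y < l" using yl x0 unfolding y_def by auto
    ultimately have "\<not> (y \<in> C0 \<and> y \<in> C1)" using nc by simp
    moreover have "y \<in> DD r" "y \<in> DD (1 - r)" using gw(1) g(1) \<open>w0 = y\<close> by auto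
    ultimately show False using r unfolding DD_def by (cases "r = 0") auto
  qed
  have w0Z: "w0 \<in> ZZ" using gw(1) w0x w0y x0 yl unfolding ZZ_def DD_def y_def by (auto split: if_splits)
  have "{w\<in>ZZ. x < w \<and> w < y} = {w0}"
  proof
    show "{w0} \<subseteq> {w\<in>ZZ. x < w \<and> w < y}" using w0Z w0x w0y by auto
    show "{w\<in>ZZ. x < w \<and> w < y} \<subseteq> {w0}"
    proof
      fix w assume w: "w \<in> {w\<in>ZZ. x < w \<and> w < y}"
      obtain r' where r': "r' < 2" "w \<in> DD r'" using ZZ_row w by blast
      have "r' \<noteq> r" using g(2) w r' by auto
      then have wD: "w \<in> DD (1 - r)" using r r' by (metis One_nat_def diff_Suc_1 diff_zero less_2_cases)
      show "w \<in> {w0}"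
      proof (rule ccontr)
        assume "w \<notin> {w0}"
        then consider "w < w0" | "w0 < w" by fastforce
        then show False
        proof cases
          case 1 then have "w + a \<le> w0" using compo_sep[OF co wD gw(1)] by simp
          then show False using w g(3) gw(2) px by auto
        next
          case 2 then have "w0 + a \<le> w" using compo_sep[OF co gw(1) wD] by simp
          then show False using w g(3) w0x by auto
        qed
      qed
    qed
  qed
  then show ?thesis unfolding y_def by simp
qed

lemma ZZ_good: "good a a (l - a) ZZ"
  unfolding good_def
proof (intro conjI ballI impI)
  show "ZZ \<subseteq> {a..l - a}" using ZZ_sub .
  show "a \<in> ZZ" "Suc a \<in> ZZ" using first_in by auto
  show "l - a - 1 \<in> ZZ" "l - a \<in> ZZ" using last_in by auto
  fix x assume x: "x \<in> ZZ" "x < l - a - 1"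
  obtain r where r: "r < 2" "x \<in> DD r" using ZZ_row x(1) by blast
  have x0: "x < l" using x by simp
  have g: "x + gap a (DD r) x \<in> DD r" "gap a (DD r) x = a \<or> gap a (DD r) x = a + 1"
    using comp_gap[OF dd_comp a1 r(2) x0] by auto
  have yl: "x + gap a (DD r) x < l" using g(2) x by auto
  have yZ: "x + gap a (DD r) x \<in> ZZ" using g(1) g(2) a1 yl unfolding ZZ_def DD_def by (auto split: if_splits)
  show "\<exists>y\<in>ZZ. (y = x + a \<or> y = x + a + 1) \<and> card {w\<in>ZZ. x < w \<and> w < y} = 1"
    using yZ g(2) mid_card[OF r(1) r(2) x(1) yl] by (intro bexI[of _ "x + gap a (DD r) x"]) auto
qed

end



context
  fixes a l :: nat and C0 C1 :: "nat set"
  assumes a1: "a \<ge> 1" and l: "l \<ge> 2 * a + 1" and c0: "compo a l C0" and c1: "compo a l C1"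
    and nc: "\<forall>x. 0 < x \<and> x < l \<longrightarrow> \<not> (x \<in> C0 \<and> x \<in> C1)"
begin

lemmas DDd = DD_def[OF a1 l c0 c1 nc]
lemmas ZZd = ZZ_def[OF a1 l c0 c1 nc]

definition b0 :: nat where "b0 = (if a \<in> C0 then 0 else 1)"

lemma cnt_a: "card {w\<in>ZZ l C0 C1. w \<le> a} = 1"
proof -
  have "{w\<in>ZZ l C0 C1. w \<le> a} = {a}" using ZZ_sub[OF a1 l c0 c1 nc] first_in[OF a1 l c0 c1 nc] by fastforce
  then show ?thesis by simp
qed

lemma cnt_a1: "card {w\<in>ZZ l C0 C1. w \<le> a + 1} = 2"
proof -
  have "{w\<in>ZZ l C0 C1. w \<le> a + 1} = {a, a + 1}" using ZZ_sub[OF a1 l c0 c1 nc] first_in[OF a1 l c0 c1 nc] by fastforce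
  then show ?thesis by simp
qed

lemma parity: "z \<in> ZZ l C0 C1 \<Longrightarrow> r < 2 \<Longrightarrow> z \<in> DD C0 C1 r \<Longrightarrow> rw (ZZ l C0 C1) b0 z = r"
proof (induction z arbitrary: r rule: less_induct)
  case (less z)
  let ?Z = "ZZ l C0 C1"
  have zpos: "0 < z" "z < l" using less.prems(1) ZZ_sub[OF a1 l c0 c1 nc] a1 l by fastforce+
  have cD: "compo a l (DD C0 C1 r)" using dd_comp[OF a1 l c0 c1 nc] .
  obtain p where p: "p \<in> DD C0 C1 r" "p < z" "p + gap a (DD C0 C1 r) p = z"
    using compo_pred[OF cD a1 less.prems(3) zpos(1)] by blast
  have ft: "(a \<in> C0 \<and> a + 1 \<in> C1 \<and> a \<notin> C1 \<and> a + 1 \<notin> C0) \<or> (a \<in> C1 \<and> a + 1 \<in> C0 \<and> a \<notin> C0 \<and> a + 1 \<notin> C1)"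
    using first_two[OF a1 l c0 c1 nc] .
  have r01: "r = 0 \<or> r = 1" using less.prems(2) by auto
  show ?case
  proof (cases "p = 0")
    case True
    then have zg: "z = a \<or> z = a + 1" using p(3) by (auto simp: gap_def split: if_splits)
    then show ?thesis
    proof
      assume za: "z = a"
      have "rw ?Z b0 z = b0" unfolding rw_def za cnt_a by (simp add: b0_def)
      moreover have "b0 = r" using r01 less.prems(3) za ft unfolding DDd b0_def by auto
      ultimately show ?thesis by simp
    next
      assume za: "z = a + 1"
      have "rw ?Z b0 z = (1 + b0) mod 2" unfolding rw_def za cnt_a1 by presburger
      moreover have "(1 + b0) mod 2 = r" using r01 less.prems(3) za ft unfolding DDd b0_def by auto
      ultimately show ?thesis by simp
    qed
  next
    case False
    have pZ: "p \<in> ?Z" using p(1) p(2) zpos False unfolding ZZd DDd by (auto split: if_splits)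
    have IH: "rw ?Z b0 p = r" using less.IH[OF p(2) pZ less.prems(2) p(1)] .
    have cm: "card {w\<in>?Z. p < w \<and> w < z} = 1"
      using mid_card[OF a1 l c0 c1 nc less.prems(2) p(1) pZ] p(3) zpos by simp
    have fin: "finite ?Z" using ZZ_fin[OF a1 l c0 c1 nc] .
    have "card {w\<in>?Z. w \<le> z} = card {w\<in>?Z. w \<le> p} + (card {w\<in>?Z. p < w \<and> w < z} + 1)"
      using card_split_le[OF fin, of p z] card_split_lt[OF fin less.prems(1) p(2)] p(2) by simp
    then have "card {w\<in>?Z. w \<le> z} = card {w\<in>?Z. w \<le> p} + 2" using cm by simp
    then show ?thesis using IH unfolding rw_def by simp
  qed
qed

lemma rowset_eq: "r < 2 \<Longrightarrow> rowset l (ZZ l C0 C1) b0 r = DD C0 C1 r"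
proof -
  assume r: "r < 2"
  let ?Z = "ZZ l C0 C1"
  have cD: "compo a l (DD C0 C1 r)" using dd_comp[OF a1 l c0 c1 nc] .
  show ?thesis
  proof
    show "rowset l ?Z b0 r \<subseteq> DD C0 C1 r"
    proof
      fix z assume z: "z \<in> rowset l ?Z b0 r"
      then consider "z = 0" | "z = l" | "z \<in> ?Z" "rw ?Z b0 z = r" unfolding rowset_def by auto
      then show "z \<in> DD C0 C1 r"
      proof cases
        case 1 then show ?thesis using comp_0[OF cD] by simp
      next
        case 2 then show ?thesis using comp_l[OF cD] by simp
      next
        case 3
        obtain r' where r': "r' < 2" "z \<in> DD C0 C1 r'" using ZZ_row[OF a1 l c0 c1 nc 3(1)] by blast
        have "rw ?Z b0 z = r'" using parity[OF 3(1) r'] .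
        then show ?thesis using r' 3(2) by simp
      qed
    qed
    show "DD C0 C1 r \<subseteq> rowset l ?Z b0 r"
    proof
      fix z assume z: "z \<in> DD C0 C1 r"
      show "z \<in> rowset l ?Z b0 r"
      proof (cases "z = 0 \<or> z = l")
        case True then show ?thesis unfolding rowset_def by auto
      next
        case False
        have "z \<in> C0 \<union> C1" using z unfolding DDd by (auto split: if_splits)
        then have zZ: "z \<in> ?Z" using False unfolding ZZd by auto
        then show ?thesis using parity[OF zZ r z] unfolding rowset_def by simp
      qed
    qed
  qed
qed

lemma back_pair:
  "rowset l ((C0 \<union> C1) - {0, l}) (if a \<in> C0 then 0 else 1) 0 = C0 \<and>
   rowset l ((C0 \<union> C1) - {0, l}) (if a \<in> C0 then 0 else 1) 1 = C1"
  using rowset_eq[of 0] rowset_eq[of 1] unfolding DDd ZZd b0_def by simp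

lemma good_explicit: "good a a (l - a) ((C0 \<union> C1) - {0, l})"
  using ZZ_good[OF a1 l c0 c1 nc] unfolding ZZd .

end



context
  fixes a l :: nat and Z :: "nat set" and b :: nat
  assumes a1: "a \<ge> 1" and l: "l \<ge> 2 * a + 1" and g: "good a a (l - a) Z" and b: "b < 2"
begin

lemma Zsub: "Z \<subseteq> {a..l - a}" using g unfolding good_def by (elim conjE)
lemma Zmem: "a \<in> Z" "a + 1 \<in> Z" "l - a - 1 \<in> Z" "l - a \<in> Z"
  using g unfolding good_def by auto
lemma Zfin: "finite Z" using good_finite[OF g] .
lemma Zstep: "x \<in> Z \<Longrightarrow> x < l - a - 1 \<Longrightarrow> \<exists>y\<in>Z. (y = x + a \<or> y = x + a + 1) \<and> card {w\<in>Z. x < w \<and> w < y} = 1"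
  using g unfolding good_def by blast

lemma Zbound: "z \<in> Z \<Longrightarrow> a \<le> z \<and> z \<le> l - a \<and> 0 < z \<and> z < l"
  using Zsub a1 l by fastforce

lemma rw_a: "rw Z b a = b"
proof -
  have "{w\<in>Z. w \<le> a} = {a}" using Zsub Zmem by fastforce
  then show ?thesis unfolding rw_def using b by simp
qed

lemma rw_a1: "rw Z b (a + 1) = 1 - b"
proof -
  have "{w\<in>Z. w \<le> a + 1} = {a, a + 1}" using Zsub Zmem by fastforce
  moreover have "b = 0 \<or> b = 1" using b by auto
  ultimately show ?thesis unfolding rw_def by (elim disjE) simp_all
qed

lemma rw_lt2: "rw Z b z < 2" unfolding rw_def by simp

lemma rw_last: "rw Z b (l - a) \<noteq> rw Z b (l - a - 1)"
proof -
  have lt: "l - a - 1 < l - a" using a1 l by simp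
  have "{u\<in>Z. l - a - 1 < u \<and> u < l - a} = {}" by auto
  then have "card {u\<in>Z. l - a - 1 < u \<and> u \<le> l - a} = 1"
    using card_split_lt[OF Zfin Zmem(4) lt] by simp
  then have "card {w\<in>Z. w \<le> l - a} = card {w\<in>Z. w \<le> l - a - 1} + 1"
    using card_split_le[OF Zfin, of "l - a - 1" "l - a"] lt by simp
  then show ?thesis unfolding rw_def by presburger
qed

lemma step:
  assumes x: "x \<in> Z" "x < l - a - 1"
  shows "\<exists>y w0. y \<in> Z \<and> w0 \<in> Z \<and> (y = x + a \<or> y = x + a + 1) \<and> {w\<in>Z. x < w \<and> w < y} = {w0}
     \<and> rw Z b y = rw Z b x \<and> rw Z b w0 \<noteq> rw Z b x"
proof -
  obtain y where y: "y \<in> Z" "y = x + a \<or> y = x + a + 1" "card {w\<in>Z. x < w \<and> w < y} = 1"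
    using Zstep[OF x] by blast
  obtain w0 where w0: "{w\<in>Z. x < w \<and> w < y} = {w0}" using card_1_singletonE[OF y(3)] by blast
  have "w0 \<in> {w\<in>Z. x < w \<and> w < y}" using w0 by simp
  then have w0Z: "w0 \<in> Z" "x < w0" "w0 < y" by auto
  have xy: "x < y" using y(2) a1 by auto
  have cy: "card {w\<in>Z. w \<le> y} = card {w\<in>Z. w \<le> x} + 2"
    using card_split_le[OF Zfin, of x y] card_split_lt[OF Zfin y(1) xy] y(3) xy by simp
  have "{w\<in>Z. x < w \<and> w \<le> w0} = {w0}"
  proof
    show "{w0} \<subseteq> {w\<in>Z. x < w \<and> w \<le> w0}" using w0Z by simp
    show "{w\<in>Z. x < w \<and> w \<le> w0} \<subseteq> {w0}"
    proof
      fix w assume "w \<in> {w\<in>Z. x < w \<and> w \<le> w0}"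
      then have "w \<in> {w\<in>Z. x < w \<and> w < y}" using w0Z by auto
      then show "w \<in> {w0}" unfolding w0 .
    qed
  qed
  then have cw: "card {w\<in>Z. w \<le> w0} = card {w\<in>Z. w \<le> x} + 1"
    using card_split_le[OF Zfin, of x w0] w0Z by simp
  have "rw Z b y = rw Z b x" unfolding rw_def cy by presburger
  moreover have "rw Z b w0 \<noteq> rw Z b x" unfolding rw_def cw by presburger
  ultimately show ?thesis using y(1,2) w0 w0Z(1) by (intro exI[of _ y] exI[of _ w0]) simp
qed

lemma rs_mem: "0 < v \<Longrightarrow> v < l \<Longrightarrow> v \<in> rowset l Z b r \<longleftrightarrow> v \<in> Z \<and> rw Z b v = r"
  unfolding rowset_def by auto

lemma rs_compo: assumes r: "r < 2" shows "compo a l (rowset l Z b r)"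
proof -
  have sub: "rowset l Z b r \<subseteq> {0..l}" unfolding rowset_def using Zbound by fastforce
  have e: "0 \<in> rowset l Z b r" "l \<in> rowset l Z b r" unfolding rowset_def by auto
  have inner: "(\<forall>v. x < v \<and> v < x + a \<longrightarrow> v \<notin> rowset l Z b r) \<and> (x + a \<in> rowset l Z b r \<or> x + a + 1 \<in> rowset l Z b r)"
    if xB: "x \<in> rowset l Z b r" and xl: "x < l" for x
  proof -
  have xc: "x = 0 \<or> (x \<in> Z \<and> rw Z b x = r)" using xB xl unfolding rowset_def by auto
  have al: "a + 1 < l" using l a1 by simp
  have goal: "(\<forall>v. x < v \<and> v < x + a \<longrightarrow> v \<notin> rowset l Z b r) \<and> (x + a \<in> rowset l Z b r \<or> x + a + 1 \<in> rowset l Z b r)"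
  proof (cases "x = 0")
    case True
    have "\<forall>v. 0 < v \<and> v < a \<longrightarrow> v \<notin> rowset l Z b r"
    proof (intro allI impI)
      fix v assume v: "0 < v \<and> v < a"
      then have "v \<notin> Z" using Zbound by fastforce
      then show "v \<notin> rowset l Z b r" using rs_mem[of v] v al by simp
    qed
    moreover have "a \<in> rowset l Z b r \<or> a + 1 \<in> rowset l Z b r"
    proof (cases "r = b")
      case True then show ?thesis using rs_mem[of a] rw_a Zmem al a1 by simp
    next
      case False
      then have "r = 1 - b" using r b by auto
      then show ?thesis using rs_mem[of "a + 1"] rw_a1 Zmem al by simp
    qed
    ultimately show ?thesis using True by simp
  next
    case False
    then have xZ: "x \<in> Z" "rw Z b x = r" using xc by auto
    have xle: "x \<le> l - a" using Zbound[OF xZ(1)] by simp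
    consider "x < l - a - 1" | "x = l - a - 1" | "x = l - a" using xle by linarith
    then show ?thesis
    proof cases
      case 1
      obtain y w0 where yw: "y \<in> Z" "w0 \<in> Z" "y = x + a \<or> y = x + a + 1" "{w\<in>Z. x < w \<and> w < y} = {w0}"
        "rw Z b y = rw Z b x" "rw Z b w0 \<noteq> rw Z b x" using step[OF xZ(1) 1] by blast
      have yB: "y \<in> rowset l Z b r" using yw(1,5) xZ(2) unfolding rowset_def by simp
      have "\<forall>v. x < v \<and> v < x + a \<longrightarrow> v \<notin> rowset l Z b r"
      proof (intro allI impI)
        fix v assume v: "x < v \<and> v < x + a"
        show "v \<notin> rowset l Z b r"
        proof
          assume vB: "v \<in> rowset l Z b r"
          have vy: "v < y" using v yw(3) by auto
          have v0: "0 < v" "v < l" using v vy Zbound[OF yw(1)] by auto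
          have "v \<in> Z" "rw Z b v = r" using rs_mem[OF v0] vB by auto
          then have "v \<in> {w\<in>Z. x < w \<and> w < y}" using v vy by simp
          then have "v = w0" using yw(4) by simp
          then show False using yw(6) xZ(2) \<open>rw Z b v = r\<close> by simp
        qed
      qed
      then show ?thesis using yB yw(3) by auto
    next
      case 2
      have "\<forall>v. x < v \<and> v < x + a \<longrightarrow> v \<notin> rowset l Z b r"
      proof (intro allI impI)
        fix v assume v: "x < v \<and> v < x + a"
        show "v \<notin> rowset l Z b r"
        proof
          assume vB: "v \<in> rowset l Z b r"
          have v0: "0 < v" "v < l" using v 2 a1 l by auto
          have vZ: "v \<in> Z" "rw Z b v = r" using rs_mem[OF v0] vB by auto
          then have "v = l - a" using Zbound[OF vZ(1)] v 2 by auto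
          then show False using rw_last vZ(2) xZ(2) 2 by simp
        qed
      qed
      moreover have "x + a + 1 = l" using 2 a1 l by simp
      ultimately show ?thesis unfolding rowset_def by auto
    next
      case 3
      have "\<forall>v. x < v \<and> v < x + a \<longrightarrow> v \<notin> rowset l Z b r"
      proof (intro allI impI)
        fix v assume v: "x < v \<and> v < x + a"
        show "v \<notin> rowset l Z b r"
        proof
          assume vB: "v \<in> rowset l Z b r"
          have v0: "0 < v" "v < l" using v 3 a1 l by auto
          have vZ: "v \<in> Z" using rs_mem[OF v0] vB by auto
          then show False using Zbound[OF vZ] v 3 by auto
        qed
      qed
      moreover have "x + a = l" using 3 a1 l by simp
      ultimately show ?thesis unfolding rowset_def by auto
    qed
  qed
  show ?thesis using goal .
  qed
  show ?thesis unfolding compo_def using sub e inner by blast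
qed

lemma rs_nc: "\<forall>x. 0 < x \<and> x < l \<longrightarrow> \<not> (x \<in> rowset l Z b 0 \<and> x \<in> rowset l Z b 1)"
  using rs_mem by auto

lemma rs_Z: "(rowset l Z b 0 \<union> rowset l Z b 1) - {0, l} = Z"
proof
  show "(rowset l Z b 0 \<union> rowset l Z b 1) - {0, l} \<subseteq> Z" unfolding rowset_def by auto
  show "Z \<subseteq> (rowset l Z b 0 \<union> rowset l Z b 1) - {0, l}"
  proof
    fix z assume z: "z \<in> Z"
    have "rw Z b z = 0 \<or> rw Z b z = 1" using rw_lt2[of z] by auto
    moreover have "z \<noteq> 0" "z \<noteq> l" using Zbound[OF z] by auto
    ultimately show "z \<in> (rowset l Z b 0 \<union> rowset l Z b 1) - {0, l}" using z unfolding rowset_def by auto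
  qed
qed

lemma rs_b: "(if a \<in> rowset l Z b 0 then 0 else 1) = b"
proof -
  have "0 < a" "a < l" using a1 l by auto
  then have "a \<in> rowset l Z b 0 \<longleftrightarrow> b = 0" using rs_mem[of a 0] rw_a Zmem by simp
  then show ?thesis using b by auto
qed

end



lemma card_pairs:
  assumes a1: "a \<ge> 1" and l: "l \<ge> 2 * a + 1"
  shows "card {(C0, C1). compo a l C0 \<and> compo a l C1 \<and> (\<forall>x. 0 < x \<and> x < l \<longrightarrow> \<not> (x \<in> C0 \<and> x \<in> C1))}
    = 2 * card {Z. good a a (l - a) Z}"
proof -
  let ?Q = "{(C0, C1). compo a l C0 \<and> compo a l C1 \<and> (\<forall>x. 0 < x \<and> x < l \<longrightarrow> \<not> (x \<in> C0 \<and> x \<in> C1))}"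
  let ?G = "{Z. good a a (l - a) Z} \<times> {0, 1 :: nat}"
  let ?f = "\<lambda>(C0, C1). ((C0 \<union> C1) - {0, l}, if a \<in> C0 then 0 else 1 :: nat)"
  let ?g = "\<lambda>(Z, b). (rowset l Z b 0, rowset l Z b 1)"
  have "bij_betw ?f ?Q ?G"
  proof (rule bij_betw_byWitness[where f' = ?g])
    show "\<forall>p\<in>?Q. ?g (?f p) = p"
    proof
      fix p assume "p \<in> ?Q"
      then obtain C0 C1 where p: "p = (C0, C1)" "compo a l C0" "compo a l C1"
        "\<forall>x. 0 < x \<and> x < l \<longrightarrow> \<not> (x \<in> C0 \<and> x \<in> C1)" by auto
      show "?g (?f p) = p" using back_pair[OF a1 l p(2,3,4)] p(1) by simp
    qed
    show "\<forall>q\<in>?G. ?f (?g q) = q"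
    proof
      fix q assume "q \<in> ?G"
      then obtain Z b where q: "q = (Z, b)" "good a a (l - a) Z" "b < 2" by auto
      show "?f (?g q) = q" using rs_Z[OF a1 l q(2,3)] rs_b[OF a1 l q(2,3)] q(1) by simp
    qed
    show "?f ` ?Q \<subseteq> ?G"
    proof
      fix q assume "q \<in> ?f ` ?Q"
      then obtain C0 C1 where p: "q = ?f (C0, C1)" "compo a l C0" "compo a l C1"
        "\<forall>x. 0 < x \<and> x < l \<longrightarrow> \<not> (x \<in> C0 \<and> x \<in> C1)" by auto
      show "q \<in> ?G" using good_explicit[OF a1 l p(2,3,4)] p(1) by simp
    qed
    show "?g ` ?G \<subseteq> ?Q"
    proof
      fix p assume "p \<in> ?g ` ?G"
      then obtain Z b where q: "p = ?g (Z, b)" "good a a (l - a) Z" "b < 2" by auto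
      show "p \<in> ?Q" using rs_compo[OF a1 l q(2,3), of 0] rs_compo[OF a1 l q(2,3), of 1]
          rs_nc[OF a1 l q(2,3)] q(1) by simp
    qed
  qed
  then have "card ?Q = card ?G" by (rule bij_betw_same_card)
  also have "\<dots> = card {Z. good a a (l - a) Z} * 2" by (simp add: card_cartesian_product)
  finally show ?thesis by simp
qed

theorem theorem4:
  fixes m l :: nat
  assumes "l \<ge> 2 * m + 3"
  shows "mu (m + 1) (m + 2) l = 2 * P (l - 2 * m - 3) {-2, int m - 1, int m}"
proof -
  define a where "a = m + 1"
  define n where "n = l - 2 * m - 3"
  have a1: "a \<ge> 1" and la: "l \<ge> 2 * a + 1" using assms unfolding a_def by auto
  have m2: "m + 2 = a + 1" unfolding a_def by simp
  have "mu (m + 1) (m + 2) l = card {T. is_metatile a (a + 1) l T \<and> is_mixed T}"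
    unfolding mu_def m2 a_def by simp
  also have "\<dots> = 2 * card {Z. good a a (l - a) Z}"
    using card_metatiles_pairs[OF a1 la] card_pairs[OF a1 la] by simp
  also have "{Z. good a a (l - a) Z} = {Z. good (m + 1) (1 + m) ((n + 2) + m) Z}"
  proof -
    have e1: "l - a = (n + 2) + m" unfolding a_def n_def using assms by simp
    have e2: "a = 1 + m" unfolding a_def by simp
    show ?thesis unfolding e1 by (simp only: e2 a_def add.commute)
  qed
  also have "card \<dots> = card {Z. good (m + 1) 1 (n + 2) Z}"
    by (rule card_good_shift) simp
  also have "\<dots> = P n {-2, int m - 1, int m}" using P_eq_good[of n m] by simp
  finally show ?thesis unfolding n_def .
qed


end
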